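(* Let $p\ge 2$ and $m\ge 2$ be integers. There exist $W\in\mathbb{R}^{2\times p}$ and $V\in\mathbb{R}^{p\times 2}$ such that the width-$2$ sine network $s^\theta(x)=V\sin(Wx)$, $\theta=(W,V)$, satisfies \[ \mathbb{P}_{(X,Y)\sim\mathcal{D}_m}\big[h_\theta(X)=Y\big]=1 . \]
   Context: Let $[p]=\{0,1,\dots,p-1\}$ and let $e_r$ ($r\in[p]$) be the standard basis vectors of $\mathbb{R}^p$. For an integer $m\ge1$, let $\mathcal{X}_m=\{x\in\{0,1,\dots,m\}^p:\ \|x\|_1=m\}$. The distribution $\mathcal{D}_m$ on $\mathcal{X}_m\times[p]$ is that of $(X,Y)$ where $s_1,\dots,s_m$ are i.i.d. uniform on $[p]$, $X=\sum_{i=1}^m e_{s_i}$ and $Y=(\sum_{i=1}^m s_i)\bmod p$ (equivalently $Y=(\sum_{r\in[p]} rX_r)\bmod p$). The function $\sin$ is applied entrywise. For a score vector $s^\theta(x)\in\mathbb{R}^p$ with coordinates indexed by $[p]$, the predictor is $h_\theta(x)=\ell$ if $s^\theta_\ell(x)>s^\theta_k(x)$ for all $k\ne\ell$, and $h_\theta(x)=\bot$ (an invalid prediction, never equal to any label) otherwise. *)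

theory Defs
  imports "HOL-Probability.Probability"
begin

fun draws :: "nat \<Rightarrow> nat \<Rightarrow> nat list pmf" where
  "draws p 0 = return_pmf []"
| "draws p (Suc m) =
     bind_pmf (pmf_of_set {..<p}) (\<lambda>s. map_pmf (\<lambda>l. s # l) (draws p m))"

text \<open>The distribution D_m of (X, Y): X = sum of e_{s_i} (vector of counts indexed by [p]),
  Y = (sum of s_i) mod p.\<close>
definition D :: "nat \<Rightarrow> nat \<Rightarrow> ((nat \<Rightarrow> nat) \<times> nat) pmf" where
  "D p m = map_pmf (\<lambda>l. (\<lambda>r. count_list l r, sum_list l mod p)) (draws p m)"

text \<open>Width-2 sine network s(x) = V sin(W x), with W a 2 x p matrix (W j r, j<2, r<p)
  and V a p x 2 matrix (V l j, l<p, j<2). Coordinate l of the score vector.\<close>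
definition score :: "nat \<Rightarrow> (nat \<Rightarrow> nat \<Rightarrow> real) \<Rightarrow> (nat \<Rightarrow> nat \<Rightarrow> real) \<Rightarrow> (nat \<Rightarrow> nat) \<Rightarrow> nat \<Rightarrow> real" where
  "score p W V x l = (\<Sum>j<2. V l j * sin (\<Sum>r<p. W j r * real (x r)))"

text \<open>Predictor: Some l if coordinate l strictly dominates all others, None (= bottom) otherwise.\<close>
definition predict :: "nat \<Rightarrow> (nat \<Rightarrow> nat \<Rightarrow> real) \<Rightarrow> (nat \<Rightarrow> nat \<Rightarrow> real) \<Rightarrow> (nat \<Rightarrow> nat) \<Rightarrow> nat option" where
  "predict p W V x =
     (if \<exists>l<p. \<forall>k<p. k \<noteq> l \<longrightarrow> score p W V x k < score p W V x l
      then Some (THE l. l < p \<and> (\<forall>k<p. k \<noteq> l \<longrightarrow> score p W V x k < score p W V x l))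
      else None)"

end

theory Submission
  imports Defs
begin

lemma draws_set:
  assumes "p > 0" "l \<in> set_pmf (draws p m)"
  shows "length l = m \<and> set l \<subseteq> {..<p}"
  using assms(2)
proof (induction m arbitrary: l)
  case 0
  then show ?case by simp
next
  case (Suc m)
  have ne: "{..<p} \<noteq> {}" using assms(1) by auto
  from Suc.prems obtain s l' where "s < p" "l' \<in> set_pmf (draws p m)" "l = s # l'"
    using ne by (auto simp: set_pmf_of_set)
  then show ?case using Suc.IH by auto
qed

lemma count_sums:
  assumes "set l \<subseteq> {..<p}"
  shows "(\<Sum>r<p. real (count_list l r)) = real (length l) \<and>
         (\<Sum>r<p. real r * real (count_list l r)) = real (sum_list l)"
  using assms
proof (induction l)
  case Nil
  then show ?case by simp
next
  case (Cons a l)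
  have ap: "a < p" using Cons.prems by auto
  have pw: "\<And>r. real (count_list (a # l) r) = (if a = r then 1 else 0) + real (count_list l r)"
    by simp
  have pw2: "\<And>r. real r * real (count_list (a # l) r) = (if a = r then real r else 0) + real r * real (count_list l r)"
    by (simp add: algebra_simps)
  have e1: "(\<Sum>r<p. real (count_list (a # l) r)) =
        (\<Sum>r<p. (if a = r then 1 else 0)) + (\<Sum>r<p. real (count_list l r))"
    by (simp only: pw sum.distrib)
  have e2: "(\<Sum>r<p. real r * real (count_list (a # l) r)) =
        (\<Sum>r<p. (if a = r then real r else 0)) + (\<Sum>r<p. real r * real (count_list l r))"
    by (simp only: pw2 sum.distrib)
  have i1: "(\<Sum>r<p. (if a = r then (1::real) else 0)) = 1" using ap by (simp add: sum.delta)
  have i2: "(\<Sum>r<p. (if a = r then real r else 0)) = real a" using ap by (simp add: sum.delta)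
  show ?case using Cons e1 e2 i1 i2 by simp
qed

lemma cos_per_nat: "cos (x + real n * (2*pi)) = cos x"
proof (induction n)
  case 0 then show ?case by simp
next
  case (Suc n)
  have "x + real (Suc n) * (2*pi) = (x + real n * (2*pi)) + 2*pi" by (simp add: algebra_simps)
  then show ?case using Suc by (simp only: cos_periodic)
qed

definition WW :: "nat \<Rightarrow> nat \<Rightarrow> nat \<Rightarrow> nat \<Rightarrow> real" where
  "WW p m = (\<lambda>j r. if j = 0 then 2*pi*real r/real p else 2*pi*real r/real p + pi/(2*real m))"

definition VV :: "nat \<Rightarrow> nat \<Rightarrow> nat \<Rightarrow> real" where
  "VV p = (\<lambda>l j. if j = 0 then sin(2*pi*real l/real p) else cos(2*pi*real l/real p))"

lemma score_eq:
  assumes "p > 0" "m > 0" "(\<Sum>r<p. real (x r)) = real m"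
    "(\<Sum>r<p. real r * real (x r)) = S"
  shows "score p (WW p m) (VV p) x l = cos (2*pi*(S - real l)/real p)"
proof -
  have s0: "(\<Sum>r<p. WW p m 0 r * real (x r)) = 2*pi*S/real p"
  proof -
    have "(\<Sum>r<p. WW p m 0 r * real (x r)) = (\<Sum>r<p. (2*pi/real p) * (real r * real (x r)))"
      by (intro sum.cong) (auto simp: WW_def)
    also have "\<dots> = (2*pi/real p) * S" by (simp only: sum_distrib_left[symmetric] assms(4))
    also have "\<dots> = 2*pi*S/real p" by simp
    finally show ?thesis .
  qed
  have s1: "(\<Sum>r<p. WW p m 1 r * real (x r)) = 2*pi*S/real p + pi/2"
  proof -
    have "(\<Sum>r<p. WW p m 1 r * real (x r)) =
       (\<Sum>r<p. 2*pi*real r/real p * real (x r)) + (\<Sum>r<p. pi/(2*real m) * real (x r))"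
      unfolding WW_def by (simp add: sum.distrib[symmetric] algebra_simps)
    also have "(\<Sum>r<p. 2*pi*real r/real p * real (x r)) = 2*pi*S/real p"
    proof -
      have "(\<Sum>r<p. 2*pi*real r/real p * real (x r)) = (\<Sum>r<p. WW p m 0 r * real (x r))"
        by (intro sum.cong) (auto simp: WW_def)
      then show ?thesis using s0 by simp
    qed
    also have "(\<Sum>r<p. pi/(2*real m) * real (x r)) = pi/2"
    proof -
      have "(\<Sum>r<p. pi/(2*real m) * real (x r)) = pi/(2*real m) * real m"
        by (simp only: sum_distrib_left[symmetric] assms(3))
      then show ?thesis using assms(2) by simp
    qed
    finally show ?thesis .
  qed
  have "score p (WW p m) (VV p) x l =
     sin(2*pi*real l/real p) * sin (2*pi*S/real p) + cos(2*pi*real l/real p) * cos (2*pi*S/real p)"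
    unfolding score_def using s0 s1 by (simp add: numeral_2_eq_2 VV_def sin_add)
  also have "\<dots> = cos (2*pi*S/real p - 2*pi*real l/real p)"
    by (simp add: cos_diff)
  also have "2*pi*S/real p - 2*pi*real l/real p = 2*pi*(S - real l)/real p"
    by (simp add: diff_divide_distrib algebra_simps)
  finally show ?thesis .
qed

lemma cos_lt:
  assumes "p > 0" "k < p" "k \<noteq> S mod p"
  shows "cos (2*pi*(real S - real k)/real p) < 1"
proof -
  define y where "y = S mod p"
  define q where "q = S div p"
  have S: "real S = real p * real q + real y" unfolding y_def q_def
    by (metis of_nat_add of_nat_mult div_mult_mod_eq mult.commute)
  have yp: "y < p" using assms(1) unfolding y_def by simp
  have "2*pi*(real S - real k)/real p = 2*pi*(real y - real k)/real p + real q * (2*pi)"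
    using S assms(1) by (simp add: field_simps)
  hence c: "cos (2*pi*(real S - real k)/real p) = cos (2*pi*(real y - real k)/real p)"
    by (simp only: cos_per_nat)
  have "cos (2*pi*(real y - real k)/real p) \<noteq> 1"
  proof
    assume "cos (2*pi*(real y - real k)/real p) = 1"
    then obtain n :: int where n: "2*pi*(real y - real k)/real p = of_int n * 2 * pi"
      by (auto simp: cos_one_2pi_int)
    hence "pi * (2 * (real y - real k)) = pi * (2 * (of_int n * real p))" using assms(1) by (simp add: field_simps)
    hence "real y - real k = of_int n * real p" using pi_gt_zero by simp
    hence e: "int y - int k = n * int p" by (metis of_int_eq_iff of_int_mult of_int_of_nat_eq of_int_diff)
    have "n = 0"
    proof (rule ccontr)
      assume "n \<noteq> 0"
      hence "\<bar>n * int p\<bar> \<ge> int p" by (simp add: abs_mult) (metis abs_ge_zero mult_le_cancel_right1 of_nat_0_le_iff zero_less_abs_iff linorder_not_le mult_right_mono order_le_less_trans abs_of_nonneg int_one_le_iff_zero_less)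
      thus False using e yp assms(2) by linarith
    qed
    thus False using e assms(3) y_def by simp
  qed
  moreover have "cos (2*pi*(real y - real k)/real p) \<le> 1" by simp
  ultimately show ?thesis using c by linarith
qed

lemma cos_eq1:
  assumes "p > 0"
  shows "cos (2*pi*(real S - real (S mod p))/real p) = 1"
proof -
  have "real S - real (S mod p) = real p * real (S div p)"
    by (metis add_diff_cancel_right' of_nat_add of_nat_mult div_mult_mod_eq mult.commute)
  hence "2*pi*(real S - real (S mod p))/real p = real (S div p) * (2*pi)"
    using assms by (simp add: field_simps)
  thus ?thesis using cos_per_nat[of 0 "S div p"] by simp
qed

theorem mainTheorem1:
  fixes p m :: nat
  assumes "p \<ge> 2" and "m \<ge> 2"
  shows "\<exists>W V :: nat \<Rightarrow> nat \<Rightarrow> real.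
           measure_pmf.prob (D p m) {(x, y). predict p W V x = Some y} = 1"
proof (intro exI)
  have p0: "p > 0" and m0: "m > 0" using assms by auto
  have "\<forall>z\<in>set_pmf (D p m). z \<in> {(x, y). predict p (WW p m) (VV p) x = Some y}"
  proof
    fix z assume "z \<in> set_pmf (D p m)"
    then obtain l where l: "l \<in> set_pmf (draws p m)"
      and z: "z = (\<lambda>r. count_list l r, sum_list l mod p)" unfolding D_def by auto
    define x where "x = (\<lambda>r. count_list l r)"
    define S where "S = sum_list l"
    define y where "y = S mod p"
    have ls: "length l = m" "set l \<subseteq> {..<p}" using draws_set[OF p0 l] by auto
    have sc: "\<And>k. score p (WW p m) (VV p) x k = cos (2*pi*(real S - real k)/real p)"
      using score_eq[OF p0 m0] count_sums[OF ls(2)] ls(1) unfolding x_def S_def by simp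
    have yp: "y < p" using p0 y_def by simp
    have dom: "\<forall>k<p. k \<noteq> y \<longrightarrow> score p (WW p m) (VV p) x k < score p (WW p m) (VV p) x y"
      using sc cos_lt[OF p0] cos_eq1[OF p0] y_def by simp
    have "(THE l. l < p \<and> (\<forall>k<p. k \<noteq> l \<longrightarrow> score p (WW p m) (VV p) x k < score p (WW p m) (VV p) x l)) = y"
    proof (rule the_equality)
      show "y < p \<and> (\<forall>k<p. k \<noteq> y \<longrightarrow> score p (WW p m) (VV p) x k < score p (WW p m) (VV p) x y)"
        using yp dom by simp
    next
      fix l' assume "l' < p \<and> (\<forall>k<p. k \<noteq> l' \<longrightarrow> score p (WW p m) (VV p) x k < score p (WW p m) (VV p) x l')"
      thus "l' = y"
      proof -
        assume h: "l' < p \<and> (\<forall>k<p. k \<noteq> l' \<longrightarrow> score p (WW p m) (VV p) x k < score p (WW p m) (VV p) x l')"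
        show "l' = y"
        proof (rule ccontr)
          assume ne: "l' \<noteq> y"
          have "score p (WW p m) (VV p) x l' < score p (WW p m) (VV p) x y" using dom h ne by simp
          moreover have "score p (WW p m) (VV p) x y < score p (WW p m) (VV p) x l'" using h yp ne by simp
          ultimately show False by simp
        qed
      qed
    qed
    hence "predict p (WW p m) (VV p) x = Some y"
      unfolding predict_def using yp dom by auto
    thus "z \<in> {(x, y). predict p (WW p m) (VV p) x = Some y}"
      using z x_def y_def S_def by simp
  qed
  hence "AE z in measure_pmf (D p m). z \<in> {(x, y). predict p (WW p m) (VV p) x = Some y}"
    by (simp add: AE_measure_pmf_iff)
  thus "measure_pmf.prob (D p m) {(x, y). predict p (WW p m) (VV p) x = Some y} = 1"
    by (simp add: measure_pmf.prob_eq_1)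
qed

end
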